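(* Let $(\mathcal{X},\rho)$ be a metric space and let $\mu_s,\mu_t$ be Borel probability measures on $\mathcal{X}$ with finite first moment. Let $H$ be a class of functions $h:\mathcal{X}\to[0,1]$, and assume every $h\in H$ is $K$-Lipschitz continuous with respect to $\rho$ for some constant $K$. Then for every $h,h'\in H$, $$\epsilon_t(h,h')\le \epsilon_s(h,h')+2K\,W_1(\mu_s,\mu_t).$$
   Context: For a probability measure $\mu$ on $\mathcal{X}$ and functions $h,h':\mathcal{X}\to[0,1]$, define $\epsilon_\mu(h,h')=\mathbb{E}_{x\sim\mu}[|h(x)-h'(x)|]$; write $\epsilon_s=\epsilon_{\mu_s}$ and $\epsilon_t=\epsilon_{\mu_t}$. The (first) Wasserstein distance is $W_1(\mathbb{P},\mathbb{Q})=\inf_{\gamma\in\Gamma(\mathbb{P},\mathbb{Q})}\int\rho(x,y)\,d\gamma(x,y)$, where $\Gamma(\mathbb{P},\mathbb{Q})$ is the set of couplings of $\mathbb{P}$ and $\mathbb{Q}$; by Kantorovich–Rubinstein duality (for separable $\mathcal{X}$) it equals $\sup_{\|f\|_L\le 1}\mathbb{E}_{\mathbb{P}}[f]-\mathbb{E}_{\mathbb{Q}}[f]$, with $\|f\|_L=\sup_{x\ne y}|f(x)-f(y)|/\rho(x,y)$. *)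

theory Defs
  imports "HOL-Probability.Probability"
begin

definition eps :: "'a measure \<Rightarrow> ('a \<Rightarrow> real) \<Rightarrow> ('a \<Rightarrow> real) \<Rightarrow> real" where
  "eps \<mu> h h' = (\<integral>x. \<bar>h x - h' x\<bar> \<partial>\<mu>)"

definition coupling :: "'a measure \<Rightarrow> 'b measure \<Rightarrow> ('a \<times> 'b) measure \<Rightarrow> bool" where
  "coupling P Q \<gamma> \<longleftrightarrow> prob_space \<gamma> \<and> sets \<gamma> = sets (P \<Otimes>\<^sub>M Q)
      \<and> distr \<gamma> P fst = P \<and> distr \<gamma> Q snd = Q"

definition W1 :: "'a::metric_space measure \<Rightarrow> 'a measure \<Rightarrow> real" where
  "W1 P Q = enn2real (INF \<gamma>\<in>{\<gamma>. coupling P Q \<gamma>}. \<integral>\<^sup>+ z. ennreal (dist (fst z) (snd z)) \<partial>\<gamma>)"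

definition finite_first_moment :: "'a::metric_space measure \<Rightarrow> bool" where
  "finite_first_moment \<mu> \<longleftrightarrow> (\<exists>x0. integrable \<mu> (\<lambda>x. dist x x0))"

end

theory Submission
  imports Defs
begin

lemma distr_pair_snd_aux:
  assumes "prob_space M" "prob_space N"
  shows "distr (M \<Otimes>\<^sub>M N) N snd = N"
proof (intro measure_eqI)
  interpret M: prob_space M by fact
  interpret N: prob_space N by fact
  interpret P: pair_sigma_finite M N ..
  fix A assume A: "A \<in> sets (distr (M \<Otimes>\<^sub>M N) N snd)"
  from A have "emeasure (distr (M \<Otimes>\<^sub>M N) N snd) A = emeasure (M \<Otimes>\<^sub>M N) (space M \<times> A)"
    by (auto simp add: emeasure_distr space_pair_measure dest: sets.sets_into_space intro!: arg_cong2[where f=emeasure])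
  with A show "emeasure (distr (M \<Otimes>\<^sub>M N) N snd) A = emeasure N A"
    using N.emeasure_pair_measure_Times[where N=M and A="space M" and B=A] M.emeasure_space_1 by simp
qed simp

lemma key:
  fixes f :: "'a::metric_space \<Rightarrow> real"
  assumes cp: "coupling P Q \<gamma>"
    and fP: "f \<in> borel_measurable P" and fQ: "f \<in> borel_measurable Q"
    and fb: "\<forall>x. f x \<in> {0..1}"
    and fl: "\<forall>x y. \<bar>f x - f y\<bar> \<le> L * dist x y" and L: "L > 0"
  shows "ennreal (((\<integral>x. f x \<partial>Q) - (\<integral>x. f x \<partial>P)) / L)
          \<le> (\<integral>\<^sup>+ z. ennreal (dist (fst z) (snd z)) \<partial>\<gamma>)"
proof -
  from cp have pg: "prob_space \<gamma>" and sg: "sets \<gamma> = sets (P \<Otimes>\<^sub>M Q)"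
    and dP: "distr \<gamma> P fst = P" and dQ: "distr \<gamma> Q snd = Q"
    unfolding coupling_def by auto
  interpret prob_space \<gamma> by fact
  have mf: "fst \<in> measurable \<gamma> P"
    using measurable_cong_sets[OF sg refl] measurable_fst by blast
  have ms: "snd \<in> measurable \<gamma> Q"
    using measurable_cong_sets[OF sg refl] measurable_snd by blast
  have m1: "(\<lambda>z. f (fst z)) \<in> borel_measurable \<gamma>"
    using measurable_comp[OF mf fP] by (simp add: comp_def)
  have m2: "(\<lambda>z. f (snd z)) \<in> borel_measurable \<gamma>"
    using measurable_comp[OF ms fQ] by (simp add: comp_def)
  have i1: "integrable \<gamma> (\<lambda>z. f (fst z))"
    by (rule integrable_const_bound[where B=1]) (use fb m1 in auto)
  have i2: "integrable \<gamma> (\<lambda>z. f (snd z))"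
    by (rule integrable_const_bound[where B=1]) (use fb m2 in auto)
  have eP: "(\<integral>x. f x \<partial>P) = (\<integral>z. f (fst z) \<partial>\<gamma>)"
    using integral_distr[OF mf fP] dP by simp
  have eQ: "(\<integral>x. f x \<partial>Q) = (\<integral>z. f (snd z) \<partial>\<gamma>)"
    using integral_distr[OF ms fQ] dQ by simp
  define g where "g z = \<bar>f (snd z) - f (fst z)\<bar> / L" for z
  have ig: "integrable \<gamma> g" unfolding g_def
    using i1 i2 by (intro integrable_divide integrable_abs Bochner_Integration.integrable_diff) auto
  have "((\<integral>x. f x \<partial>Q) - (\<integral>x. f x \<partial>P)) / L = (\<integral>z. (f (snd z) - f (fst z)) / L \<partial>\<gamma>)"
    using eP eQ i1 i2 by (simp add: Bochner_Integration.integral_diff)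
  also have "\<dots> \<le> integral\<^sup>L \<gamma> g"
    unfolding g_def using i1 i2 L
    by (intro integral_mono integrable_divide integrable_abs Bochner_Integration.integrable_diff)
       (auto simp: divide_right_mono)
  finally have le: "((\<integral>x. f x \<partial>Q) - (\<integral>x. f x \<partial>P)) / L \<le> integral\<^sup>L \<gamma> g" .
  have "ennreal (integral\<^sup>L \<gamma> g) = (\<integral>\<^sup>+ z. ennreal (g z) \<partial>\<gamma>)"
    using ig L by (subst nn_integral_eq_integral) (auto simp: g_def)
  also have "\<dots> \<le> (\<integral>\<^sup>+ z. ennreal (dist (fst z) (snd z)) \<partial>\<gamma>)"
  proof (rule nn_integral_mono)
    fix z
    have "\<bar>f (snd z) - f (fst z)\<bar> \<le> L * dist (fst z) (snd z)"
      using fl by (metis dist_commute)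
    then have "g z \<le> dist (fst z) (snd z)" using L
      unfolding g_def by (simp add: divide_le_eq mult.commute)
    then show "ennreal (g z) \<le> ennreal (dist (fst z) (snd z))" by (rule ennreal_leI)
  qed
  finally show ?thesis using le ennreal_leI order_trans by blast
qed

theorem lemma1:
  fixes \<mu>s \<mu>t :: "'a::metric_space measure"
    and H :: "('a \<Rightarrow> real) set" and K :: real
  assumes "prob_space \<mu>s" "sets \<mu>s = sets borel" "finite_first_moment \<mu>s"
    and "prob_space \<mu>t" "sets \<mu>t = sets borel" "finite_first_moment \<mu>t"
    and "\<forall>h\<in>H. \<forall>x. h x \<in> {0..1}"
    and "\<forall>h\<in>H. K-lipschitz_on UNIV h"
    and "h \<in> H" "h' \<in> H"
  shows "eps \<mu>t h h' \<le> eps \<mu>s h h' + 2 * K * W1 \<mu>s \<mu>t"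
proof -
  note lip = assms(8) and bnd = assms(7)
  interpret S: prob_space \<mu>s by fact
  interpret T: prob_space \<mu>t by fact
  have K0: "K \<ge> 0" using lip assms(9) lipschitz_on_nonneg by blast
  define f where "f x = \<bar>h x - h' x\<bar>" for x
  have fb: "\<forall>x. f x \<in> {0..1}"
  proof
    fix x
    have "h x \<in> {0..1}" "h' x \<in> {0..1}" using bnd assms(9,10) by auto
    then show "f x \<in> {0..1}" unfolding f_def by auto
  qed
  have fl: "\<forall>x y. \<bar>f x - f y\<bar> \<le> (2*K) * dist x y"
  proof (intro allI)
    fix x y
    have a: "dist (h x) (h y) \<le> K * dist x y" using lip assms(9) lipschitz_onD by blast
    have b: "dist (h' x) (h' y) \<le> K * dist x y" using lip assms(10) lipschitz_onD by blast
    have "\<bar>f x - f y\<bar> \<le> \<bar>h x - h y\<bar> + \<bar>h' x - h' y\<bar>" unfolding f_def by linarith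
    then show "\<bar>f x - f y\<bar> \<le> (2*K) * dist x y" using a b by (simp add: dist_real_def)
  qed
  have ch: "continuous_on UNIV h" using lip assms(9) lipschitz_on_continuous_on by blast
  have ch': "continuous_on UNIV h'" using lip assms(10) lipschitz_on_continuous_on by blast
  have fbor: "f \<in> borel_measurable borel" unfolding f_def
    by (intro borel_measurable_continuous_onI continuous_intros ch ch')
  have fS: "f \<in> borel_measurable \<mu>s" using fbor measurable_cong_sets[OF assms(2) refl] by blast
  have fT: "f \<in> borel_measurable \<mu>t" using fbor measurable_cong_sets[OF assms(5) refl] by blast
  have eS: "eps \<mu>s h h' = (\<integral>x. f x \<partial>\<mu>s)" unfolding eps_def f_def ..
  have eT: "eps \<mu>t h h' = (\<integral>x. f x \<partial>\<mu>t)" unfolding eps_def f_def ..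
  define \<gamma>0 where "\<gamma>0 = \<mu>s \<Otimes>\<^sub>M \<mu>t"
  interpret PP: pair_prob_space \<mu>s \<mu>t ..
  have cp0: "coupling \<mu>s \<mu>t \<gamma>0"
    unfolding coupling_def \<gamma>0_def
    using T.distr_pair_fst[of \<mu>s] distr_pair_snd_aux[OF assms(1,4)] PP.prob_space_axioms
    by simp
  define I where "I = (INF \<gamma>\<in>{\<gamma>. coupling \<mu>s \<mu>t \<gamma>}. \<integral>\<^sup>+ z. ennreal (dist (fst z) (snd z)) \<partial>\<gamma>)"
  have W: "W1 \<mu>s \<mu>t = enn2real I" unfolding W1_def I_def ..
  show ?thesis
  proof (cases "K = 0")
    case True
    have "\<forall>x. f x = f undefined"
    proof
      fix x
      have "\<bar>f x - f undefined\<bar> \<le> (2*K) * dist x undefined" using fl by blast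
      then show "f x = f undefined" using True by simp
    qed
    then obtain c where fc: "\<And>x. f x = c" by blast
    have "(\<integral>x. f x \<partial>\<mu>s) = c" using S.prob_space by (simp add: fc)
    moreover have "(\<integral>x. f x \<partial>\<mu>t) = c" using T.prob_space by (simp add: fc)
    ultimately show ?thesis using eS eT True by simp
  next
    case False
    then have Kp: "2*K > 0" using K0 by simp
    define D where "D = (\<integral>x. f x \<partial>\<mu>t) - (\<integral>x. f x \<partial>\<mu>s)"
    have DI: "ennreal (D / (2*K)) \<le> I"
      unfolding I_def D_def
      by (rule INF_greatest, rule key[OF _ fS fT fb fl Kp]) simp
    obtain x0 where x0: "integrable \<mu>s (\<lambda>x. dist x x0)"
      using assms(3) unfolding finite_first_moment_def by blast
    obtain x1 where x1: "integrable \<mu>t (\<lambda>x. dist x x1)"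
      using assms(6) unfolding finite_first_moment_def by blast
    have mfst: "fst \<in> measurable \<gamma>0 \<mu>s" unfolding \<gamma>0_def by simp
    have msnd: "snd \<in> measurable \<gamma>0 \<mu>t" unfolding \<gamma>0_def by simp
    have d0: "(\<lambda>x. ennreal (dist x x0)) \<in> borel_measurable \<mu>s"
      using x0 by (intro measurable_compose[OF _ measurable_ennreal]) auto
    have d1: "(\<lambda>x. ennreal (dist x x1)) \<in> borel_measurable \<mu>t"
      using x1 by (intro measurable_compose[OF _ measurable_ennreal]) auto
    have g0: "(\<lambda>z. ennreal (dist (fst z) x0)) \<in> borel_measurable \<gamma>0"
      using measurable_comp[OF mfst d0] by (simp add: comp_def)
    have g1: "(\<lambda>z. ennreal (dist (snd z) x1)) \<in> borel_measurable \<gamma>0"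
      using measurable_comp[OF msnd d1] by (simp add: comp_def)
    have n0: "(\<integral>\<^sup>+ z. ennreal (dist (fst z) x0) \<partial>\<gamma>0) = (\<integral>\<^sup>+ x. ennreal (dist x x0) \<partial>\<mu>s)"
      using nn_integral_distr[OF mfst, of "\<lambda>x. ennreal (dist x x0)"] d0
      T.distr_pair_fst[of \<mu>s] unfolding \<gamma>0_def by simp
    have n1: "(\<integral>\<^sup>+ z. ennreal (dist (snd z) x1) \<partial>\<gamma>0) = (\<integral>\<^sup>+ x. ennreal (dist x x1) \<partial>\<mu>t)"
      using nn_integral_distr[OF msnd, of "\<lambda>x. ennreal (dist x x1)"] d1
      distr_pair_snd_aux[OF assms(1,4)] unfolding \<gamma>0_def by simp
    have f0: "(\<integral>\<^sup>+ x. ennreal (dist x x0) \<partial>\<mu>s) < \<infinity>"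
      using nn_integral_eq_integral[OF x0] by simp
    have f1: "(\<integral>\<^sup>+ x. ennreal (dist x x1) \<partial>\<mu>t) < \<infinity>"
      using nn_integral_eq_integral[OF x1] by simp
    have pg: "prob_space \<gamma>0" using cp0 unfolding coupling_def by simp
    have "(\<integral>\<^sup>+ z. ennreal (dist (fst z) (snd z)) \<partial>\<gamma>0)
        \<le> (\<integral>\<^sup>+ z. ennreal (dist (fst z) x0) + (ennreal (dist x0 x1) + ennreal (dist (snd z) x1)) \<partial>\<gamma>0)"
    proof (rule nn_integral_mono)
      fix z
      have "dist (fst z) (snd z) \<le> dist (fst z) x0 + (dist x0 x1 + dist (snd z) x1)"
        using dist_triangle[of "fst z" "snd z" x0] dist_triangle[of x0 "snd z" x1]
          dist_commute[of x1 "snd z"] by linarith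
      then show "ennreal (dist (fst z) (snd z)) \<le> ennreal (dist (fst z) x0) + (ennreal (dist x0 x1) + ennreal (dist (snd z) x1))"
        by (simp add: ennreal_plus[symmetric] del: ennreal_plus)
    qed
    also have "\<dots> = (\<integral>\<^sup>+ z. ennreal (dist (fst z) x0) \<partial>\<gamma>0) + ((\<integral>\<^sup>+ z. ennreal (dist x0 x1) \<partial>\<gamma>0) + (\<integral>\<^sup>+ z. ennreal (dist (snd z) x1) \<partial>\<gamma>0))"
      using g0 g1 by (simp add: nn_integral_add)
    also have "\<dots> < \<infinity>"
      using n0 n1 f0 f1 prob_space.emeasure_space_1[OF pg] by (simp add: ennreal_mult_less_top)
    finally have fin0: "(\<integral>\<^sup>+ z. ennreal (dist (fst z) (snd z)) \<partial>\<gamma>0) < \<infinity>" .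
    have "I \<le> (\<integral>\<^sup>+ z. ennreal (dist (fst z) (snd z)) \<partial>\<gamma>0)"
      unfolding I_def using cp0 by (intro INF_lower) simp
    with fin0 have Ifin: "I < \<infinity>" by simp
    have "D / (2*K) \<le> enn2real I"
    proof (cases "D / (2*K) \<ge> 0")
      case True
      then show ?thesis using enn2real_mono[OF DI] Ifin by simp
    next
      case False then show ?thesis using enn2real_nonneg[of I] by linarith
    qed
    then have "D \<le> 2 * K * enn2real I" using Kp by (simp add: divide_le_eq mult.commute)
    then show ?thesis using eS eT W unfolding D_def by simp
  qed
qed

end
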